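(* Let $m,b\ge 1$ and $r\ge 0$ be integers, let $f\colon[0,1]\to\mathbb R$ be $(r+1)$-times differentiable with $|f^{(r+1)}(x)|\le M$ for all $x\in[0,1]$, and let $B=(B_1,\dots,B_b)\in\mathrm{PTE}(m,b,r)$. Setting $$c_j=\sum_{i\in B_j}\int_{(i-1)/m}^{i/m} f(x)\,dx,\qquad j=1,\dots,b,$$ we have, for all $i,j\in\{1,\dots,b\}$, $$|c_i-c_j|\le \frac{M}{2^{r}\,b\,(r+1)!}.$$
   Context: $[m]=\{1,\dots,m\}$. A partition of $[m]$ into $b$ blocks is an ordered list $(B_1,\dots,B_b)$ of pairwise disjoint (possibly empty) subsets with union $[m]$. It is $r$-regular if $\sum_{x\in B_1}x^k=\dots=\sum_{x\in B_b}x^k$ for all $k=0,1,\dots,r$. $\mathrm{PTE}(m,b,r)$ denotes the set of $r$-regular partitions of $[m]$ into $b$ blocks. *)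

theory Defs
  imports "HOL-Analysis.Analysis"
begin

text \<open>An ordered partition (B_1,...,B_b) of [m] into b (possibly empty) blocks is
  represented as a function B from block indices to sets, with blocks indexed by
  1..b and B j = {} for j outside 1..b.\<close>

definition PTE :: "nat \<Rightarrow> nat \<Rightarrow> nat \<Rightarrow> (nat \<Rightarrow> nat set) set" where
  "PTE m b r = {B.
     (\<forall>j. j \<notin> {1..b} \<longrightarrow> B j = {}) \<and>
     (\<forall>i\<in>{1..b}. \<forall>j\<in>{1..b}. i \<noteq> j \<longrightarrow> B i \<inter> B j = {}) \<and>
     (\<Union>j\<in>{1..b}. B j) = {1..m} \<and>
     (\<forall>k\<le>r. \<forall>i\<in>{1..b}. \<forall>j\<in>{1..b}. (\<Sum>x\<in>B i. x ^ k) = (\<Sum>x\<in>B j. x ^ k))}"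

end

theory Submission
  imports Defs "HOL-Computational_Algebra.Polynomial"
begin

lemma taylor_rem:
  fixes r :: nat and f :: "real \<Rightarrow> real" and Df :: "nat \<Rightarrow> real \<Rightarrow> real" and M x :: real
  assumes "Df 0 = f"
    and D: "\<And>k x. k \<le> r \<Longrightarrow> x \<in> {0..1} \<Longrightarrow>
           (Df k has_real_derivative Df (Suc k) x) (at x within {0..1})"
    and MB: "\<And>x. x \<in> {0..1} \<Longrightarrow> \<bar>Df (Suc r) x\<bar> \<le> M"
    and x: "0 < x" "x < 1"
  shows "\<bar>f x - (\<Sum>k<Suc r. Df k (1/2) / fact k * (x - 1/2)^k)\<bar> \<le> M / (2^(r+1) * fact (r+1))"
proof (cases "x = 1/2")
  case True
  have M0: "0 \<le> M" using MB[of 0] by auto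
  have x0: "x - 1/2 = 0" using True by simp
  have "(\<Sum>k<Suc r. Df k (1/2) / fact k * (x - 1/2)^k) = f x"
    unfolding sum.lessThan_Suc_shift x0 using assms(1) by (simp add: True)
  then show ?thesis using M0 by simp
next
  case False
  have DA: "\<forall>k t. k < Suc r \<and> min x (1/2) \<le> t \<and> t \<le> max x (1/2) \<longrightarrow> DERIV (Df k) t :> Df (Suc k) t"
  proof (intro allI impI)
    fix k t assume h: "k < Suc r \<and> min x (1/2) \<le> t \<and> t \<le> max x (1/2)"
    then have t: "t \<in> interior {0..1::real}" using x by auto
    show "DERIV (Df k) t :> Df (Suc k) t"
      using D[of k t] h t interior_subset at_within_interior[OF t] by fastforce
  qed
  have "\<exists>t. (if x < 1/2 then x < t \<and> t < 1/2 else 1/2 < t \<and> t < x) \<and>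
    f x = (\<Sum>k<Suc r. (Df k (1/2) / fact k) * (x - 1/2)^k) + (Df (Suc r) t / fact (Suc r)) * (x - 1/2)^(Suc r)"
    by (rule Taylor[OF _ assms(1) DA]) (use False in auto)
  then obtain t where t: "(if x < 1/2 then x < t \<and> t < 1/2 else 1/2 < t \<and> t < x)"
    and eq: "f x = (\<Sum>k<Suc r. (Df k (1/2) / fact k) * (x - 1/2)^k) + (Df (Suc r) t / fact (Suc r)) * (x - 1/2)^(Suc r)"
    by blast
  have t01: "t \<in> {0..1}" using t x by (auto split: if_splits)
  have "\<bar>x - 1/2\<bar> \<le> 1/2" using x by (simp add: abs_if)
  then have p: "\<bar>x - 1/2\<bar>^(Suc r) \<le> (1/2)^(Suc r)" by (intro power_mono) auto
  have "\<bar>f x - (\<Sum>k<Suc r. Df k (1/2) / fact k * (x - 1/2)^k)\<bar> = \<bar>Df (Suc r) t\<bar> / fact (Suc r) * \<bar>x - 1/2\<bar>^(Suc r)"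
    using eq by (simp add: abs_mult power_abs)
  also have "\<dots> \<le> M / fact (Suc r) * (1/2)^(Suc r)"
    using MB[OF t01] p by (intro mult_mono divide_right_mono) auto
  also have "\<dots> = M / (2^(r+1) * fact (r+1))" by (simp add: power_one_over)
  finally show ?thesis .
qed

lemma int_pow:
  fixes u v c :: real assumes "u \<le> v"
  shows "((\<lambda>x. (x - c)^k) has_integral ((v - c)^(k+1) - (u - c)^(k+1)) / (k+1)) {u..v}"
proof -
  define F where "F = (\<lambda>x::real. (x - c)^(k+1) / (k+1))"
  have "((\<lambda>x. (x - c)^k) has_integral (F v - F u)) {u..v}"
  proof (rule fundamental_theorem_of_calculus[OF assms])
    fix x assume "x \<in> {u..v}"
    have "((\<lambda>x. (x - c)^(k+1) / (k+1)) has_real_derivative (real (k+1) * (x-c)^k) / (k+1)) (at x within {u..v})"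
      by (rule derivative_eq_intros refl | simp)+
    then have "((\<lambda>x. (x - c)^(k+1) / (k+1)) has_real_derivative (x - c)^k) (at x within {u..v})"
      by simp
    then show "(F has_vector_derivative (x - c)^k) (at x within {u..v})"
      unfolding F_def by (simp add: has_real_derivative_iff_has_vector_derivative)
  qed
  then show ?thesis by (simp add: diff_divide_distrib F_def)
qed

lemma poly_sum_le:
  fixes p :: "real poly" assumes "degree p \<le> n"
  shows "poly p x = (\<Sum>i\<le>n. coeff p i * x ^ i)"
proof -
  have "poly p x = (\<Sum>i\<le>degree p. coeff p i * x ^ i)" by (rule poly_altdef)
  also have "\<dots> = (\<Sum>i\<le>n. coeff p i * x ^ i)"
    by (rule sum.mono_neutral_left) (auto simp: assms coeff_eq_0 not_le)
  finally show ?thesis .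
qed

lemma deg_diff0:
  fixes p q :: "real poly" assumes "degree p = k+1" "degree q = k+1" "lead_coeff p = lead_coeff q"
  shows "degree (p - q) \<le> k"
proof (rule degree_le, intro allI impI)
  fix i assume "k < i"
  show "coeff (p - q) i = 0"
  proof (cases "i = k+1")
    case True then show ?thesis using assms by simp
  next
    case False
    then have "i > k+1" using \<open>k < i\<close> by auto
    then show ?thesis using assms by (simp add: coeff_eq_0)
  qed
qed

lemma deg_diff:
  fixes a1 a2 s :: real assumes "s \<noteq> 0"
  shows "degree ([:a1, s:]^(k+1) - [:a2, s:]^(k+1)) \<le> k"
proof (rule deg_diff0)
  show d1: "degree ([:a1, s:]^(k+1)) = k+1" using assms by (subst degree_power_eq) auto
  show d2: "degree ([:a2, s:]^(k+1)) = k+1" using assms by (subst degree_power_eq) auto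
  show "lead_coeff ([:a1, s:]^(k+1)) = lead_coeff ([:a2, s:]^(k+1))"
    unfolding lead_coeff_power using assms by simp
qed


lemma poly_block_eq:
  fixes q :: "real poly"
  assumes "degree q \<le> r"
    and PS: "\<And>k. k \<le> r \<Longrightarrow> (\<Sum>x\<in>X. x ^ k) = (\<Sum>x\<in>Y. (x::nat) ^ k)"
  shows "(\<Sum>l\<in>X. poly q (real l)) = (\<Sum>l\<in>Y. poly q (real l))"
proof -
  have e: "(\<Sum>l\<in>Z. poly q (real l)) = (\<Sum>s\<le>r. coeff q s * real (\<Sum>x\<in>Z. x ^ s))" for Z
    unfolding poly_sum_le[OF assms(1)]
    by (subst sum.swap) (simp add: sum_distrib_left of_nat_sum)
  show ?thesis unfolding e using PS by simp
qed

theorem mainTheorem15: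
  fixes m b r :: nat and f :: "real \<Rightarrow> real" and Df :: "nat \<Rightarrow> real \<Rightarrow> real"
    and M :: real and B :: "nat \<Rightarrow> nat set" and c :: "nat \<Rightarrow> real"
  assumes "m \<ge> 1" and "b \<ge> 1"
    and "Df 0 = f"
    and "\<And>k x. k \<le> r \<Longrightarrow> x \<in> {0..1} \<Longrightarrow>
           (Df k has_real_derivative Df (Suc k) x) (at x within {0..1})"
    and "\<And>x. x \<in> {0..1} \<Longrightarrow> \<bar>Df (Suc r) x\<bar> \<le> M"
    and "B \<in> PTE m b r"
    and "\<And>j. c j = (\<Sum>i\<in>B j. integral {(real i - 1) / real m .. real i / real m} f)"
    and "i \<in> {1..b}" and "j \<in> {1..b}"
  shows "\<bar>c i - c j\<bar> \<le> M / (2 ^ r * real b * fact (r + 1))"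
proof -
  note D = assms(4) and MB = assms(5)
  have M0: "0 \<le> M" using MB[of 0] by auto
  define K where "K = M / (2^(r+1) * fact (r+1))"
  have K0: "0 \<le> K" unfolding K_def using M0 by simp
  define P where "P = (\<lambda>x. \<Sum>k<Suc r. Df k (1/2) / fact k * (x - 1/2)^k)"
  have Rb: "\<bar>f x - P x\<bar> \<le> K" if "0 < x" "x < 1" for x
    unfolding K_def P_def by (rule taylor_rem[OF assms(3) D MB that])
  have contf: "continuous_on {0..1} f"
    using DERIV_continuous_on[of "{0..1}" f "Df 1"] D[of 0] assms(3) by auto
  have contP: "continuous_on S P" for S unfolding P_def by (intro continuous_intros)
  have mpos: "real m > 0" using assms(1) by simp
  define u where "u = (\<lambda>l::nat. (real l - 1) / real m)"
  define v where "v = (\<lambda>l::nat. real l / real m)"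
  have uv: "0 \<le> u l \<and> u l \<le> v l \<and> v l \<le> 1" if "l \<in> {1..m}" for l
    using that mpos unfolding u_def v_def by (auto simp: field_simps)
  define Q where "Q = (\<lambda>k::nat. smult (1/(k+1)) ([:-1/2, 1/real m:]^(k+1) - [:-1/2 - 1/real m, 1/real m:]^(k+1)))"
  define a where "a = (\<lambda>k. Df k (1/2) / fact k)"
  define IP where "IP = (\<lambda>l. \<Sum>k<Suc r. a k * poly (Q k) (real l))"
  define IR where "IR = (\<lambda>l. integral {u l..v l} (\<lambda>x. f x - P x))"
  have split: "integral {u l..v l} f = IP l + IR l" if l: "l \<in> {1..m}" for l
  proof -
    have hk: "((\<lambda>x. a k * (x - 1/2)^k) has_integral (a k * poly (Q k) (real l))) {u l..v l}" for k
    proof (rule has_integral_mult_right)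
      have p1: "poly [:-1/2, 1/real m:] (real l) = v l - 1/2" unfolding v_def by simp
      have p2: "poly [:-1/2 - 1/real m, 1/real m:] (real l) = u l - 1/2"
        unfolding u_def using mpos by (simp add: field_simps)
      have "poly (Q k) (real l) = ((v l - 1/2)^(k+1) - (u l - 1/2)^(k+1)) / (k+1)"
        unfolding Q_def poly_smult poly_diff poly_power p1 p2 by simp
      then show "((\<lambda>x. (x - 1/2)^k) has_integral poly (Q k) (real l)) {u l..v l}"
        using int_pow[of "u l" "v l" "1/2" k] uv[OF l] by simp
    qed
    have "((\<lambda>x. \<Sum>k<Suc r. a k * (x - 1/2)^k) has_integral IP l) {u l..v l}"
      unfolding IP_def by (rule has_integral_sum) (use hk in auto)
    then have hP: "(P has_integral IP l) {u l..v l}"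
      unfolding P_def a_def by simp
    have sub: "{u l..v l} \<subseteq> {0..1}" using uv[OF l] by auto
    have "f integrable_on {u l..v l}"
      by (rule integrable_continuous_interval) (rule continuous_on_subset[OF contf sub])
    then have "((\<lambda>x. f x - P x) has_integral (integral {u l..v l} f - IP l)) {u l..v l}"
      using has_integral_diff[OF integrable_integral hP] by blast
    then have "IR l = integral {u l..v l} f - IP l" unfolding IR_def by (rule integral_unique)
    then show ?thesis by simp
  qed
  have IRb: "\<bar>IR l\<bar> \<le> K / m" if l: "l \<in> {1..m}" for l
  proof -
    have sub: "{u l..v l} \<subseteq> {0..1}" using uv[OF l] by auto
    have "(\<lambda>x. f x - P x) integrable_on {u l..v l}"
      by (rule integrable_continuous_interval)
        (intro continuous_intros continuous_on_subset[OF contf sub] contP)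
    then have "norm (IR l) \<le> K * Henstock_Kurzweil_Integration.content {u l..v l}"
      unfolding IR_def
      by (intro has_integral_bound_real[OF K0, of "{0,1}"]) (use sub Rb in \<open>auto simp: less_le\<close>)
    also have "Henstock_Kurzweil_Integration.content {u l..v l} = 1 / m" using uv[OF l] mpos unfolding u_def v_def
      by (simp add: field_simps)
    finally show ?thesis by simp
  qed
  have H: "(\<forall>j. j \<notin> {1..b} \<longrightarrow> B j = {}) \<and>
     (\<forall>i\<in>{1..b}. \<forall>j\<in>{1..b}. i \<noteq> j \<longrightarrow> B i \<inter> B j = {}) \<and>
     (\<Union>j\<in>{1..b}. B j) = {1..m} \<and>
     (\<forall>k\<le>r. \<forall>i\<in>{1..b}. \<forall>j\<in>{1..b}. (\<Sum>x\<in>B i. x ^ k) = (\<Sum>x\<in>B j. x ^ k))"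
    using assms(6) unfolding PTE_def by (rule CollectD)
  note dis = H[THEN conjunct2, THEN conjunct1]
  note un = H[THEN conjunct2, THEN conjunct2, THEN conjunct1]
  note ps = H[THEN conjunct2, THEN conjunct2, THEN conjunct2]
  have Bsub: "B j' \<subseteq> {1..m}" if "j' \<in> {1..b}" for j' using un that by blast
  have fin: "finite (B j')" if "j' \<in> {1..b}" for j' using Bsub[OF that] finite_subset by blast
  define N where "N = card (B i)"
  have cardeq: "card (B j') = N" if "j' \<in> {1..b}" for j'
    using ps[rule_format, of 0 j' i] that assms(8) unfolding N_def by simp
  have "m = card (\<Union>j\<in>{1..b}. B j)" using un by simp
  also have "\<dots> = (\<Sum>j\<in>{1..b}. card (B j))"
    by (rule card_UN_disjoint) (use fin dis in auto)
  also have "\<dots> = b * N" using cardeq by simp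
  finally have mbN: "m = b * N" .
  have cdec: "c j' = (\<Sum>l\<in>B j'. IP l) + (\<Sum>l\<in>B j'. IR l)" if "j' \<in> {1..b}" for j'
    unfolding assms(7) sum.distrib[symmetric]
    by (rule sum.cong[OF refl]) (use split Bsub[OF that] in \<open>auto simp: u_def v_def\<close>)
  have IPsum: "(\<Sum>l\<in>B j'. IP l) = (\<Sum>k<Suc r. a k * (\<Sum>l\<in>B j'. poly (Q k) (real l)))" for j'
    unfolding IP_def by (subst sum.swap) (simp add: sum_distrib_left)
  have degQ: "degree (Q k) \<le> r" if "k < Suc r" for k
  proof -
    have "degree (Q k) \<le> degree ([:-1/2, 1/real m:]^(k+1) - [:-1/2 - 1/real m, 1/real m:]^(k+1))"
      unfolding Q_def by (rule degree_smult_le)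
    also have "\<dots> \<le> k" by (rule deg_diff) (use mpos in simp)
    finally show ?thesis using that by simp
  qed
  have IPeq: "(\<Sum>l\<in>B i. IP l) = (\<Sum>l\<in>B j. IP l)"
  proof -
    have PSij: "(\<Sum>x\<in>B i. x ^ k) = (\<Sum>x\<in>B j. x ^ k)" if "k \<le> r" for k
      using ps that assms(8,9) by blast
    have e: "(\<Sum>l\<in>B i. poly (Q k) (real l)) = (\<Sum>l\<in>B j. poly (Q k) (real l))" if "k < Suc r" for k
      by (rule poly_block_eq[OF degQ[OF that] PSij])
    show ?thesis unfolding IPsum by (rule sum.cong[OF refl]) (simp add: e)
  qed
  have bnd: "\<bar>\<Sum>l\<in>B j'. IR l\<bar> \<le> N * (K / m)" if "j' \<in> {1..b}" for j'
  proof -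
    have "\<bar>\<Sum>l\<in>B j'. IR l\<bar> \<le> (\<Sum>l\<in>B j'. \<bar>IR l\<bar>)" by (rule sum_abs)
    also have "\<dots> \<le> (\<Sum>l\<in>B j'. K / m)" by (rule sum_mono) (use IRb Bsub[OF that] in auto)
    also have "\<dots> = N * (K / m)" using cardeq[OF that] by simp
    finally show ?thesis .
  qed
  have "\<bar>c i - c j\<bar> = \<bar>(\<Sum>l\<in>B i. IR l) - (\<Sum>l\<in>B j. IR l)\<bar>"
    using cdec[OF assms(8)] cdec[OF assms(9)] IPeq by simp
  also have "\<dots> \<le> N * (K / m) + N * (K / m)"
    by (rule order_trans[OF abs_triangle_ineq4 add_mono[OF bnd[OF assms(8)] bnd[OF assms(9)]]])
  also have "\<dots> = M / (2 ^ r * real b * fact (r + 1))"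
  proof -
    have Npos: "real N > 0" using mpos mbN by (cases N) auto
    have bpos: "real b > 0" using assms(2) by simp
    have "real N * (K / real m) + real N * (K / real m) = 2 * K / real b"
      unfolding mbN using Npos bpos by (simp add: field_simps)
    also have "\<dots> = M / (2 ^ r * real b * fact (r + 1))"
    proof -
      define F :: real where "F = fact (r+1)"
      have F0: "F > 0" unfolding F_def by simp
      have "2 * (M / (2^(r+1) * F)) / real b = M / (2^r * real b * F)"
        using F0 bpos by (simp add: field_simps)
      then show ?thesis unfolding K_def F_def .
    qed
    finally show ?thesis .
  qed
  finally show ?thesis .
qed

end
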